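(* Let $t\ge 2$, $k\ge 1$, and let $a_1,\dots,a_t\in\mathbb{F}_2[x]$ be polynomials each coprime with $x^k-1$. Let $C$ be the binary linear $[tk,k]$ code (a $1$-generator quasi-cyclic code of co-index $k$ with generating row $(a_1,\dots,a_t)$) generated by the rows of the $k\times tk$ matrix $(\mathrm{Circ}(a_1)\mid\mathrm{Circ}(a_2)\mid\cdots\mid\mathrm{Circ}(a_t))$. Then $C$ is a $t$-CIS code.
   Context: For $a\in\mathbb{F}_2[x]$, write $a\bmod (x^k-1)=\sum_{i=0}^{k-1}\alpha_ix^i$; $\mathrm{Circ}(a)$ is the $k\times k$ circulant matrix over $\mathbb{F}_2$ whose first row is $(\alpha_0,\dots,\alpha_{k-1})$ and each subsequent row is the cyclic right shift of the previous one. A binary linear $[tk,k]$ code is $t$-CIS if its coordinate set can be partitioned into $t$ pairwise disjoint information sets, an information set being a set of $k$ coordinates whose columns in a generator matrix are linearly independent. *)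

theory Defs
  imports "HOL-Library.Z2" "HOL-Computational_Algebra.Polynomial"
begin

definition xk_minus_1 :: "nat \<Rightarrow> bit poly" where
  "xk_minus_1 k = monom 1 k - 1"

text \<open>The first row is
  (alpha_0,...,alpha_{k-1}) with a mod (x^k-1) = sum alpha_i x^i, and row i is the
  first row cyclically shifted right i times, so entry (i,c) = alpha_{(c-i) mod k}.\<close>
definition circ :: "nat \<Rightarrow> bit poly \<Rightarrow> nat \<Rightarrow> nat \<Rightarrow> bit" where
  "circ k a i c = coeff (a mod xk_minus_1 k) ((c + k - i) mod k)"

definition qc_gen :: "nat \<Rightarrow> nat \<Rightarrow> (nat \<Rightarrow> bit poly) \<Rightarrow> nat \<Rightarrow> nat \<Rightarrow> bit" where
  "qc_gen t k a i j = circ k (a (j div k)) i (j mod k)"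

definition cols_lin_indep :: "nat \<Rightarrow> (nat \<Rightarrow> nat \<Rightarrow> bit) \<Rightarrow> nat set \<Rightarrow> bool" where
  "cols_lin_indep k G S \<longleftrightarrow>
     (\<forall>c :: nat \<Rightarrow> bit. (\<forall>i<k. (\<Sum>j\<in>S. c j * G i j) = 0) \<longrightarrow> (\<forall>j\<in>S. c j = 0))"

definition info_set :: "nat \<Rightarrow> nat \<Rightarrow> (nat \<Rightarrow> nat \<Rightarrow> bit) \<Rightarrow> nat set \<Rightarrow> bool" where
  "info_set n k G S \<longleftrightarrow> S \<subseteq> {0..<n} \<and> card S = k \<and> cols_lin_indep k G S"

definition is_CIS :: "nat \<Rightarrow> nat \<Rightarrow> (nat \<Rightarrow> nat \<Rightarrow> bit) \<Rightarrow> bool" where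
  "is_CIS t k G \<longleftrightarrow>
     (\<exists>P :: nat \<Rightarrow> nat set.
        (\<forall>b<t. info_set (t * k) k G (P b)) \<and>
        (\<forall>b<t. \<forall>b'<t. b \<noteq> b' \<longrightarrow> P b \<inter> P b' = {}) \<and>
        (\<Union>b<t. P b) = {0..<t * k})"

end

theory Submission
  imports Defs
begin

lemma my_coprime_dvd:
  fixes p A c :: "'a::euclidean_ring"
  assumes cop: "coprime p A" and d: "p dvd A * c"
  shows "p dvd c"
proof -
  define I where "I = {x. \<exists>u v. x = u*p + v*A}"
  have memI: "u*p+v*A \<in> I" for u v unfolding I_def by blast
  have pI: "p \<in> I" using memI[of 1 0] by simp
  have AI: "A \<in> I" using memI[of 0 1] by simp
  have "p \<noteq> 0 \<or> A \<noteq> 0"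
  proof (rule ccontr)
    assume "\<not> (p \<noteq> 0 \<or> A \<noteq> 0)"
    then have "p = 0" "A = 0" by auto
    then have "is_unit (0::'a)" using coprime_common_divisor[OF cop, of 0] by simp
    then show False by simp
  qed
  then obtain x0 where x0: "x0 \<in> I" "x0 \<noteq> 0" using pI AI by blast
  define n where "n = (LEAST n. \<exists>g\<in>I. g \<noteq> 0 \<and> euclidean_size g = n)"
  have "\<exists>g\<in>I. g \<noteq> 0 \<and> euclidean_size g = n" unfolding n_def
    by (rule LeastI_ex) (use x0 in blast)
  then obtain g where g: "g \<in> I" "g \<noteq> 0" "euclidean_size g = n" by blast
  have minimal: "n \<le> euclidean_size x" if "x \<in> I" "x \<noteq> 0" for x
    unfolding n_def by (rule Least_le) (use that in blast)
  from g(1) obtain u v where gu: "g = u*p+v*A" by (auto simp: I_def)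
  have gdvd: "g dvd y" if "y \<in> I" for y
  proof -
    from that obtain u' v' where y: "y = u'*p + v'*A" by (auto simp: I_def)
    have "y mod g = y - (y div g) * g" by (simp add: minus_div_mult_eq_mod)
    also have "\<dots> = (u' - (y div g)*u)*p + (v' - (y div g)*v)*A"
      unfolding y gu by (simp add: algebra_simps)
    finally have "y mod g \<in> I" using memI by simp
    moreover have "euclidean_size (y mod g) < euclidean_size g" using g(2) by (rule mod_size_less)
    ultimately have "y mod g = 0" using minimal g(3) by force
    then show ?thesis by (simp add: dvd_eq_mod_eq_0)
  qed
  have "is_unit g" using coprime_common_divisor[OF cop gdvd[OF pI] gdvd[OF AI]] .
  then obtain w where w: "1 = g * w" by (rule dvdE)
  have "g * c = (u * c) * p + v * (A * c)" unfolding gu by (simp add: algebra_simps)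
  then have "p dvd g * c" using d by simp
  then have "p dvd g * c * w" by (rule dvd_mult2)
  moreover have "g * c * w = c" using w by (simp add: algebra_simps)
  ultimately show ?thesis by simp
qed

lemma pow_minus_one_dvd:
  fixes x :: "'a::comm_ring_1"
  shows "x - 1 dvd x ^ q - 1"
proof (induction q)
  case 0 then show ?case by simp
next
  case (Suc q)
  have "x ^ Suc q - 1 = x * (x ^ q - 1) + (x - 1)" by (simp add: algebra_simps)
  then show ?case using Suc by (metis dvd_add dvd_mult dvd_refl)
qed

lemma dvd_shift:
  assumes "k \<ge> 1"
  shows "xk_minus_1 k dvd monom (1::bit) N - monom 1 (N mod k)"
proof -
  have N: "N = N mod k + k * (N div k)" by simp
  have "monom (1::bit) N = monom 1 (N mod k) * (monom 1 k) ^ (N div k)"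
    by (subst N) (simp add: mult_monom monom_power)
  then have "monom (1::bit) N - monom 1 (N mod k) = monom 1 (N mod k) * ((monom 1 k) ^ (N div k) - 1)"
    by (simp add: algebra_simps)
  moreover have "xk_minus_1 k dvd (monom 1 k) ^ (N div k) - 1"
    unfolding xk_minus_1_def by (rule pow_minus_one_dvd)
  ultimately show ?thesis by (metis dvd_mult)
qed

lemma degree_p:
  assumes "k \<ge> 1"
  shows "degree (xk_minus_1 k) = k"
proof -
  have e: "xk_minus_1 k = monom 1 k + (- 1)" unfolding xk_minus_1_def by simp
  have d1: "degree (monom (1::bit) k) = k" by (rule degree_monom_eq) simp
  have "degree (- 1 :: bit poly) = 0" by simp
  then have "degree (- 1 :: bit poly) < degree (monom (1::bit) k)" using d1 assms by simp
  then have "degree (monom 1 k + (- 1 :: bit poly)) = degree (monom (1::bit) k)" by (rule degree_add_eq_left)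
  then show ?thesis using e d1 by simp
qed

lemma indep_block:
  fixes a :: "bit poly" and c :: "nat \<Rightarrow> bit"
  assumes k: "k \<ge> 1" and cop: "coprime a (xk_minus_1 k)"
    and hyp: "\<forall>i<k. (\<Sum>u<k. c u * coeff (a mod xk_minus_1 k) ((u + k - i) mod k)) = 0"
  shows "\<forall>u<k. c u = 0"
proof -
  define p where "p = xk_minus_1 k"
  define A where "A = a mod p"
  define \<alpha> where "\<alpha> n = coeff A n" for n
  define ct where "ct = (\<Sum>u<k. monom (c u) ((k - u) mod k))"
  define r where "r = (\<Sum>m<k. monom (\<Sum>u<k. c u * \<alpha> ((m+u) mod k)) m)"
  have degp: "degree p = k" using degree_p[OF k] p_def by simp
  have p0: "p \<noteq> 0" using degp k by auto
  have degA: "degree A \<le> k - 1"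
  proof (cases "A = 0")
    case False
    have "degree A < degree p" unfolding A_def using p0 False
      by (metis A_def degree_mod_less)
    then show ?thesis using degp by simp
  qed simp
  have Aexp: "A = (\<Sum>n<k. monom (\<alpha> n) n)"
  proof -
    have "{..<k} = {..k-1}" using k by auto
    then show ?thesis using poly_as_sum_of_monoms'[OF degA] \<alpha>_def by simp
  qed
  have q: "A * ct = (\<Sum>u<k. \<Sum>n<k. monom (\<alpha> n * c u) (n + (k-u) mod k))"
    unfolding Aexp ct_def sum_distrib_right sum_distrib_left mult_monom
    by (rule refl)
  have inv1: "((m + u) mod k + (k - u) mod k) mod k = m" if "m < k" "u < k" for m u
  proof (cases "u = 0")
    case True then show ?thesis using that by simp
  next
    case False
    then have "(k - u) mod k = k - u" using that by simp
    then have "((m + u) mod k + (k - u) mod k) mod k = (m + u + (k - u)) mod k"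
      by (simp add: mod_add_left_eq)
    also have "\<dots> = (m + k) mod k" using that by simp
    finally show ?thesis using that by simp
  qed
  have inv2: "((n + (k - u) mod k) mod k + u) mod k = n" if "n < k" "u < k" for n u
  proof (cases "u = 0")
    case True then show ?thesis using that by simp
  next
    case False
    then have "(k - u) mod k = k - u" using that by simp
    then have "((n + (k - u) mod k) mod k + u) mod k = (n + (k - u) + u) mod k"
      by (simp add: mod_add_left_eq)
    also have "\<dots> = (n + k) mod k" using that by simp
    finally show ?thesis using that by simp
  qed
  have rr: "r = (\<Sum>u<k. \<Sum>n<k. monom (\<alpha> n * c u) ((n + (k-u) mod k) mod k))"
  proof -
    have "r = (\<Sum>m<k. \<Sum>u<k. monom (c u * \<alpha> ((m+u) mod k)) m)"
      unfolding r_def monom_sum ..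
    also have "\<dots> = (\<Sum>u<k. \<Sum>m<k. monom (c u * \<alpha> ((m+u) mod k)) m)"
      by (rule sum.swap)
    also have "\<dots> = (\<Sum>u<k. \<Sum>n<k. monom (\<alpha> n * c u) ((n + (k-u) mod k) mod k))"
    proof (rule sum.cong[OF refl])
      fix u assume u: "u \<in> {..<k}"
      show "(\<Sum>m<k. monom (c u * \<alpha> ((m+u) mod k)) m) =
            (\<Sum>n<k. monom (\<alpha> n * c u) ((n + (k-u) mod k) mod k))"
        apply (rule sum.reindex_bij_witness[of _ "\<lambda>n. (n + (k-u) mod k) mod k" "\<lambda>m. (m+u) mod k"])
        using u inv1 inv2 k by (auto simp: mult.commute)
    qed
    finally show ?thesis .
  qed
  have r0: "r = 0"
  proof -
    have "(\<Sum>u<k. c u * \<alpha> ((m+u) mod k)) = 0" if m: "m < k" for m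
    proof -
      define i where "i = (k - m) mod k"
      have i: "i < k" using k i_def by simp
      have eq: "(u + k - i) mod k = (m + u) mod k" if "u < k" for u
      proof (cases "m = 0")
        case True then show ?thesis using i_def by simp
      next
        case False
        then have "i = k - m" using i_def m by simp
        then show ?thesis using m by (simp add: add.commute)
      qed
      have "(\<Sum>u<k. c u * \<alpha> ((m+u) mod k)) = (\<Sum>u<k. c u * coeff (a mod xk_minus_1 k) ((u + k - i) mod k))"
      proof (rule sum.cong[OF refl])
        fix u assume "u \<in> {..<k}"
        then show "c u * \<alpha> ((m+u) mod k) = c u * coeff (a mod xk_minus_1 k) ((u + k - i) mod k)"
          using eq[of u] by (simp add: \<alpha>_def A_def p_def)
      qed
      then show ?thesis using hyp i by simp
    qed
    then show ?thesis unfolding r_def by simp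
  qed
  have "p dvd A * ct - r"
  proof -
    have e: "A * ct - r = (\<Sum>u<k. \<Sum>n<k. monom (\<alpha> n * c u) (n + (k-u) mod k)
            - monom (\<alpha> n * c u) ((n + (k-u) mod k) mod k))"
      unfolding q rr sum_subtractf[symmetric] by (rule refl)
    have "p dvd (\<Sum>u<k. \<Sum>n<k. monom (\<alpha> n * c u) (n + (k-u) mod k)
            - monom (\<alpha> n * c u) ((n + (k-u) mod k) mod k))"
    proof (intro dvd_sum)
      fix u n
      have e2: "monom (\<alpha> n * c u) (n + (k-u) mod k) - monom (\<alpha> n * c u) ((n + (k-u) mod k) mod k)
          = smult (\<alpha> n * c u) (monom 1 (n + (k-u) mod k) - monom 1 ((n + (k-u) mod k) mod k))"
        by (simp only: smult_diff_right smult_monom mult_1_right)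
      have "p dvd smult (\<alpha> n * c u) (monom 1 (n + (k-u) mod k) - monom 1 ((n + (k-u) mod k) mod k))"
        unfolding p_def by (rule dvd_smult[OF dvd_shift[OF k]])
      then show "p dvd monom (\<alpha> n * c u) (n + (k-u) mod k) - monom (\<alpha> n * c u) ((n + (k-u) mod k) mod k)"
        by (simp only: e2)
    qed
    then show ?thesis by (simp only: e)
  qed
  then have pA: "p dvd A * ct" by (simp only: r0 diff_zero)
  have "coprime A p" unfolding A_def using coprime_mod_left_iff[OF p0, of a] cop[folded p_def] by (rule iffD2)
  then have cpA: "coprime p A" by (rule coprime_commute[THEN iffD1])
  have pct: "p dvd ct" using cpA pA by (rule my_coprime_dvd)
  have coeff_ct: "coeff ct n = (\<Sum>u<k. if (k - u) mod k = n then c u else 0)" for n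
    unfolding ct_def coeff_sum coeff_monom by simp
  have "degree ct \<le> k - 1"
  proof (rule degree_le, intro allI impI)
    fix n assume "k - 1 < n"
    have "\<forall>u<k. (k - u) mod k \<noteq> n"
    proof (intro allI impI)
      fix u assume "u < k"
      have "(k - u) mod k < k" using k by simp
      then show "(k - u) mod k \<noteq> n" using \<open>k - 1 < n\<close> by linarith
    qed
    then show "coeff ct n = 0" unfolding coeff_ct by simp
  qed
  then have ct0: "ct = 0"
  proof (rule contrapos_pp)
    assume "ct \<noteq> 0"
    then have "degree p \<le> degree ct" by (rule dvd_imp_degree_le[OF pct])
    then show "\<not> degree ct \<le> k - 1" using degp k by linarith
  qed
  show ?thesis
  proof (intro allI impI)
    fix u0 assume u0: "u0 < k"
    have "coeff ct ((k - u0) mod k) = (\<Sum>u<k. if u = u0 then c u else 0)"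
      unfolding coeff_ct
    proof (rule sum.cong[OF refl])
      fix u assume u: "u \<in> {..<k}"
      have m: "(k - x) mod k = (if x = 0 then 0 else k - x)" if "x < k" for x
        using that by auto
      have "((k - u) mod k = (k - u0) mod k) = (u = u0)"
        using u u0 unfolding m[OF u0] by (simp add: m) arith
      then show "(if (k - u) mod k = (k - u0) mod k then c u else 0) = (if u = u0 then c u else 0)" by simp
    qed
    also have "\<dots> = c u0" using u0 by simp
    finally show "c u0 = 0" using ct0 by simp
  qed
qed

theorem proposition4:
  fixes t k :: nat and a :: "nat \<Rightarrow> bit poly"
  assumes "t \<ge> 2" and "k \<ge> 1"
    and "\<forall>b<t. coprime (a b) (xk_minus_1 k)"
  shows "is_CIS t k (qc_gen t k a)"
proof -
  have k: "k \<ge> 1" using assms by simp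
  define P where "P b = {b*k..<b*k+k}" for b
  have img: "P b = (\<lambda>u. b*k+u) ` {..<k}" for b
  proof (rule set_eqI, rule iffI)
    fix x assume "x \<in> P b"
    then have "b*k \<le> x" "x < b*k+k" by (auto simp: P_def)
    then show "x \<in> (\<lambda>u. b*k+u) ` {..<k}" by (intro image_eqI[of _ _ "x - b*k"]) auto
  next
    fix x assume "x \<in> (\<lambda>u. b*k+u) ` {..<k}"
    then show "x \<in> P b" by (auto simp: P_def)
  qed
  have info: "info_set (t * k) k (qc_gen t k a) (P b)" if b: "b < t" for b
  proof -
    have "(b+1)*k \<le> t*k" using b by (intro mult_le_mono1) simp
    then have "b*k+k \<le> t*k" by simp
    then have sub: "P b \<subseteq> {0..<t*k}" unfolding P_def by auto
    have card: "card (P b) = k" unfolding P_def by simp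
    have "cols_lin_indep k (qc_gen t k a) (P b)"
      unfolding cols_lin_indep_def
    proof (intro allI impI ballI)
      fix c :: "nat \<Rightarrow> bit" and j
      assume h: "\<forall>i<k. (\<Sum>j\<in>P b. c j * qc_gen t k a i j) = 0" and j: "j \<in> P b"
      define c' where "c' u = c (b*k+u)" for u
      have inj: "inj_on (\<lambda>u. b*k+u) {..<k}" by (auto simp: inj_on_def)
      have "\<forall>i<k. (\<Sum>u<k. c' u * coeff (a b mod xk_minus_1 k) ((u + k - i) mod k)) = 0"
      proof (intro allI impI)
        fix i assume i: "i < k"
        have "(\<Sum>j\<in>P b. c j * qc_gen t k a i j) = (\<Sum>u<k. c (b*k+u) * qc_gen t k a i (b*k+u))"
          unfolding img by (simp add: sum.reindex[OF inj])
        also have "\<dots> = (\<Sum>u<k. c' u * coeff (a b mod xk_minus_1 k) ((u + k - i) mod k))"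
        proof (rule sum.cong[OF refl])
          fix u assume u: "u \<in> {..<k}"
          have "(b*k+u) div k = b" "(b*k+u) mod k = u" using u k by auto
          then show "c (b*k+u) * qc_gen t k a i (b*k+u) = c' u * coeff (a b mod xk_minus_1 k) ((u + k - i) mod k)"
            unfolding qc_gen_def circ_def c'_def by simp
        qed
        finally show "(\<Sum>u<k. c' u * coeff (a b mod xk_minus_1 k) ((u + k - i) mod k)) = 0"
          using h i by simp
      qed
      then have z: "\<forall>u<k. c' u = 0" using indep_block[OF k] assms(3) b by blast
      from j obtain u where "u < k" "j = b*k+u" unfolding img by auto
      then show "c j = 0" using z c'_def by simp
    qed
    then show ?thesis unfolding info_set_def using sub card by simp
  qed
  have disj: "P b \<inter> P b' = {}" if "b \<noteq> b'" for b b'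
  proof -
    have "b < b' \<or> b' < b" using that by linarith
    moreover have "b*k+k \<le> b'*k" if "b < b'"
    proof -
      have "(b+1)*k \<le> b'*k" using that by (intro mult_le_mono1) simp
      then show ?thesis by simp
    qed
    moreover have "b'*k+k \<le> b*k" if "b' < b"
    proof -
      have "(b'+1)*k \<le> b*k" using that by (intro mult_le_mono1) simp
      then show ?thesis by simp
    qed
    ultimately have "b*k+k \<le> b'*k \<or> b'*k+k \<le> b*k" by blast
    then show ?thesis unfolding P_def by auto
  qed
  have un: "(\<Union>b<t. P b) = {0..<t * k}"
  proof
    show "(\<Union>b<t. P b) \<subseteq> {0..<t * k}"
      using info unfolding info_set_def by blast
  next
    show "{0..<t * k} \<subseteq> (\<Union>b<t. P b)"
    proof
      fix j assume j: "j \<in> {0..<t*k}"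
      have "j div k < t" using j by (simp add: less_mult_imp_div_less)
      moreover have "j \<in> P (j div k)"
      proof -
        have e: "j div k * k + j mod k = j" by (rule div_mult_mod_eq)
        have "j mod k < k" using k by simp
        then have "j div k * k \<le> j" "j < j div k * k + k" using e by linarith+
        then show ?thesis unfolding P_def by simp
      qed
      ultimately show "j \<in> (\<Union>b<t. P b)" by blast
    qed
  qed
  show ?thesis unfolding is_CIS_def using info disj un by blast
qed

end
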